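(* Let $\mathcal U$ and $\mathcal V$ be non-commutative domains in $M(\mathbb C)^g$. If $f:\mathcal U\to\mathcal V$ is a free map and each $f[n]:\mathcal U(n)\to\mathcal V(n)$ is bianalytic (a holomorphic bijection with holomorphic inverse), then $f$ is a bianalytic free map, i.e. $f$ and $f^{-1}=(f[n]^{-1})_n:\mathcal V\to\mathcal U$ are both proper analytic free maps.
   Context: $M_n(\mathbb C)^g$ denotes $g$-tuples $X=(X_1,\dots,X_g)$ of $n\times n$ complex matrices; $X\Gamma$, $\Gamma Y$, $U^*XU$, $X\oplus Y$ are defined entrywise (the last block diagonally). A non-commutative set $\mathcal U\subseteq M(\mathbb C)^g$ is a sequence $(\mathcal U(n))_n$, $\mathcal U(n)\subseteq M_n(\mathbb C)^g$, closed under simultaneous unitary similarity $X\mapsto U^*XU$ and under direct sums $X\in\mathcal U(n),Y\in\mathcal U(m)\Rightarrow X\oplus Y\in\mathcal U(n+m)$; it is a non-commutative domain if each $\mathcal U(n)$ is open and connected. A free map $f:\mathcal U\to\mathcal V$ is a sequence of functions $f[n]:\mathcal U(n)\to\mathcal V(n)$ such that whenever $X\in\mathcal U(n)$, $Y\in\mathcal U(m)$, $\Gamma\in\mathbb C^{n\times m}$ with $X\Gamma=\Gamma Y$, then $f[n](X)\Gamma=\Gamma f[m](Y)$. An analytic free map is a free map with each $f[n]$ holomorphic; it is proper if each $f[n]:\mathcal U(n)\to\mathcal V(n)$ is proper (preimages of compact sets are compact). *)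

theory Defs
  imports "HOL-Analysis.Analysis"
begin

text \<open>A g-tuple X = (X_1,...,X_g) of n x n complex matrices is encoded as a function
  X :: nat => nat => nat => complex, where X i j k is the (j,k) entry of X_(i+1)
  (indices i < g, j < n, k < n, 0-based), and X vanishes outside this box.
  The function type carries the product topology (HOL-Analysis.Function_Topology);
  restricted to the finite-dimensional space of such tuples it is the Euclidean topology.\<close>

type_synonym mtuple = "nat \<Rightarrow> nat \<Rightarrow> nat \<Rightarrow> complex"

definition mspace :: "nat \<Rightarrow> nat \<Rightarrow> mtuple set" where
  "mspace g n = {X. \<forall>i j k. \<not> (i < g \<and> j < n \<and> k < n) \<longrightarrow> X i j k = 0}"

definition mnorm :: "nat \<Rightarrow> nat \<Rightarrow> mtuple \<Rightarrow> real" where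
  "mnorm g n X = sqrt (\<Sum>i<g. \<Sum>j<n. \<Sum>k<n. (cmod (X i j k))\<^sup>2)"

definition mdiff :: "mtuple \<Rightarrow> mtuple \<Rightarrow> mtuple" where
  "mdiff X Y = (\<lambda>i j k. X i j k - Y i j k)"

definition mclinear :: "nat \<Rightarrow> nat \<Rightarrow> (mtuple \<Rightarrow> mtuple) \<Rightarrow> bool" where
  "mclinear g n L \<longleftrightarrow> (\<forall>X\<in>mspace g n. L X \<in> mspace g n) \<and>
     (\<forall>a X Y. X \<in> mspace g n \<longrightarrow> Y \<in> mspace g n \<longrightarrow>
        L (\<lambda>i j k. a * X i j k + Y i j k) = (\<lambda>i j k. a * L X i j k + L Y i j k))"

definition mholo_on :: "nat \<Rightarrow> nat \<Rightarrow> (mtuple \<Rightarrow> mtuple) \<Rightarrow> mtuple set \<Rightarrow> bool" where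
  "mholo_on g n F S \<longleftrightarrow> (\<forall>X\<in>S. F X \<in> mspace g n) \<and>
     (\<forall>X\<in>S. \<exists>L. mclinear g n L \<and>
        ((\<lambda>Y. mnorm g n (mdiff (mdiff (F Y) (F X)) (L (mdiff Y X))) / mnorm g n (mdiff Y X))
            \<longlongrightarrow> 0) (at X within S))"

definition unitary_mat :: "nat \<Rightarrow> (nat \<Rightarrow> nat \<Rightarrow> complex) \<Rightarrow> bool" where
  "unitary_mat n W \<longleftrightarrow> (\<forall>a<n. \<forall>b<n. (\<Sum>c<n. cnj (W c a) * W c b) = (if a = b then 1 else 0))"

definition usim :: "nat \<Rightarrow> nat \<Rightarrow> (nat \<Rightarrow> nat \<Rightarrow> complex) \<Rightarrow> mtuple \<Rightarrow> mtuple" where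
  "usim g n W X = (\<lambda>i j k. if i < g \<and> j < n \<and> k < n
      then (\<Sum>a<n. \<Sum>b<n. cnj (W a j) * X i a b * W b k) else 0)"

definition dsum :: "nat \<Rightarrow> mtuple \<Rightarrow> mtuple \<Rightarrow> mtuple" where
  "dsum n X Y = (\<lambda>i j k. if j < n \<and> k < n then X i j k
      else if n \<le> j \<and> n \<le> k then Y i (j - n) (k - n) else 0)"

definition nc_set :: "nat \<Rightarrow> (nat \<Rightarrow> mtuple set) \<Rightarrow> bool" where
  "nc_set g U \<longleftrightarrow>
     (\<forall>n>0. U n \<subseteq> mspace g n) \<and>
     (\<forall>n>0. \<forall>W X. unitary_mat n W \<longrightarrow> X \<in> U n \<longrightarrow> usim g n W X \<in> U n) \<and>
     (\<forall>n>0. \<forall>m>0. \<forall>X Y. X \<in> U n \<longrightarrow> Y \<in> U m \<longrightarrow> dsum n X Y \<in> U (n + m))"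

definition nc_domain :: "nat \<Rightarrow> (nat \<Rightarrow> mtuple set) \<Rightarrow> bool" where
  "nc_domain g U \<longleftrightarrow> nc_set g U \<and>
     (\<forall>n>0. openin (top_of_set (mspace g n)) (U n) \<and> connected (U n))"

definition intertwines :: "nat \<Rightarrow> nat \<Rightarrow> nat \<Rightarrow> mtuple \<Rightarrow> (nat \<Rightarrow> nat \<Rightarrow> complex) \<Rightarrow> mtuple \<Rightarrow> bool" where
  "intertwines g n m X \<Gamma> Y \<longleftrightarrow> (\<forall>i<g. \<forall>a<n. \<forall>b<m.
      (\<Sum>c<n. X i a c * \<Gamma> c b) = (\<Sum>c<m. \<Gamma> a c * Y i c b))"

definition free_map :: "nat \<Rightarrow> (nat \<Rightarrow> mtuple set) \<Rightarrow> (nat \<Rightarrow> mtuple set) \<Rightarrow> (nat \<Rightarrow> mtuple \<Rightarrow> mtuple) \<Rightarrow> bool" where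
  "free_map g U V f \<longleftrightarrow>
     (\<forall>n>0. \<forall>X\<in>U n. f n X \<in> V n) \<and>
     (\<forall>n>0. \<forall>m>0. \<forall>X\<in>U n. \<forall>Y\<in>U m. \<forall>\<Gamma>.
        intertwines g n m X \<Gamma> Y \<longrightarrow> intertwines g n m (f n X) \<Gamma> (f m Y))"

definition analytic_free_map :: "nat \<Rightarrow> (nat \<Rightarrow> mtuple set) \<Rightarrow> (nat \<Rightarrow> mtuple set) \<Rightarrow> (nat \<Rightarrow> mtuple \<Rightarrow> mtuple) \<Rightarrow> bool" where
  "analytic_free_map g U V f \<longleftrightarrow> free_map g U V f \<and> (\<forall>n>0. mholo_on g n (f n) (U n))"

definition proper_on :: "mtuple set \<Rightarrow> mtuple set \<Rightarrow> (mtuple \<Rightarrow> mtuple) \<Rightarrow> bool" where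
  "proper_on A B F \<longleftrightarrow> (\<forall>K. K \<subseteq> B \<longrightarrow> compact K \<longrightarrow> compact {X\<in>A. F X \<in> K})"

definition proper_analytic_free_map :: "nat \<Rightarrow> (nat \<Rightarrow> mtuple set) \<Rightarrow> (nat \<Rightarrow> mtuple set) \<Rightarrow> (nat \<Rightarrow> mtuple \<Rightarrow> mtuple) \<Rightarrow> bool" where
  "proper_analytic_free_map g U V f \<longleftrightarrow> analytic_free_map g U V f \<and>
     (\<forall>n>0. proper_on (U n) (V n) (f n))"

definition bianalytic_on :: "nat \<Rightarrow> nat \<Rightarrow> mtuple set \<Rightarrow> mtuple set \<Rightarrow> (mtuple \<Rightarrow> mtuple) \<Rightarrow> bool" where
  "bianalytic_on g n A B F \<longleftrightarrow> bij_betw F A B \<and> mholo_on g n F A \<and> mholo_on g n (inv_into A F) B"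

end

theory Submission
  imports Defs
begin


lemma sum_split_add: "(\<Sum>c<n+m. h c) = (\<Sum>c<n. h c) + (\<Sum>c<m. h (c+n::nat))"
  by (induction m) (auto simp: add.commute add.left_commute)

lemma sum_delta_r: "(\<Sum>c\<in>A. h c * (if c = b then 1 else 0)) = (if b \<in> A \<and> finite A then h b else (0::complex))"
proof -
  have "(\<lambda>c. h c * (if c = b then 1 else 0)) = (\<lambda>c. if c = b then h c else 0)" by auto
  then have "(\<Sum>c\<in>A. h c * (if c = b then 1 else 0)) = (\<Sum>c\<in>A. if c = b then h c else 0)" by (rule arg_cong[where f="\<lambda>f. sum f A"])
  then show ?thesis by (cases "finite A") (simp_all add: sum.delta')
qed

lemma sum_delta_l: "(\<Sum>c\<in>A. (if b = c then 1 else 0) * h c) = (if b \<in> A \<and> finite A then h b else (0::complex))"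
proof -
  have "(\<lambda>c. (if b = c then 1 else 0) * h c) = (\<lambda>c. if b = c then h c else 0)" by auto
  then have "(\<Sum>c\<in>A. (if b = c then 1 else 0) * h c) = (\<Sum>c\<in>A. if b = c then h c else 0)" by (rule arg_cong[where f="\<lambda>f. sum f A"])
  then show ?thesis by (cases "finite A") (simp_all add: sum.delta)
qed

definition Smat :: "nat \<Rightarrow> complex \<Rightarrow> (nat \<Rightarrow> nat \<Rightarrow> complex) \<Rightarrow> nat \<Rightarrow> nat \<Rightarrow> complex" where
  "Smat n t \<Gamma> = (\<lambda>a b. (if a = b then 1 else 0) + (if a < n \<and> n \<le> b then t * \<Gamma> a (b-n) else 0))"

lemma Smat_left:
  assumes "a < n + m"
  shows "(\<Sum>c<n+m. Smat n t \<Gamma> a c * u c) = u a + (if a < n then t * (\<Sum>c<m. \<Gamma> a c * u (c+n)) else 0)"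
proof -
  have "(\<Sum>c<n+m. Smat n t \<Gamma> a c * u c) = (\<Sum>c<n+m. (if a = c then 1 else 0) * u c) +
     (\<Sum>c<n+m. (if a < n \<and> n \<le> c then t * \<Gamma> a (c-n) else 0) * u c)"
    unfolding Smat_def by (simp add: algebra_simps sum.distrib)
  also have "(\<Sum>c<n+m. (if a = c then 1 else 0) * u c) = u a"
    using assms by (simp add: sum_delta_l)
  also have "(\<Sum>c<n+m. (if a < n \<and> n \<le> c then t * \<Gamma> a (c-n) else 0) * u c)
      = (if a < n then t * (\<Sum>c<m. \<Gamma> a c * u (c+n)) else 0)"
    unfolding sum_split_add[of _ n m] by (simp add: sum_distrib_left algebra_simps)
  finally show ?thesis .
qed

lemma Smat_right:
  assumes "b < n + m"
  shows "(\<Sum>c<n+m. h c * Smat n t \<Gamma> c b) = h b + (if n \<le> b then t * (\<Sum>c<n. h c * \<Gamma> c (b-n)) else 0)"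
proof -
  have "(\<Sum>c<n+m. h c * Smat n t \<Gamma> c b) = (\<Sum>c<n+m. h c * (if c = b then 1 else 0)) +
     (\<Sum>c<n+m. h c * (if c < n \<and> n \<le> b then t * \<Gamma> c (b-n) else 0))"
    unfolding Smat_def by (simp add: algebra_simps sum.distrib)
  also have "(\<Sum>c<n+m. h c * (if c = b then 1 else 0)) = h b"
    using assms by (simp add: sum_delta_r)
  also have "(\<Sum>c<n+m. h c * (if c < n \<and> n \<le> b then t * \<Gamma> c (b-n) else 0))
      = (if n \<le> b then t * (\<Sum>c<n. h c * \<Gamma> c (b-n)) else 0)"
    unfolding sum_split_add[of _ n m] by (simp add: sum_distrib_left algebra_simps)
  finally show ?thesis .
qed

definition Dmat :: "nat \<Rightarrow> nat \<Rightarrow> mtuple \<Rightarrow> (nat \<Rightarrow> nat \<Rightarrow> complex) \<Rightarrow> mtuple \<Rightarrow> nat \<Rightarrow> nat \<Rightarrow> nat \<Rightarrow> complex" where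
  "Dmat n m X1 \<Gamma> X2 = (\<lambda>i a b. (\<Sum>c<n. X1 i a c * \<Gamma> c b) - (\<Sum>c<m. \<Gamma> a c * X2 i c b))"

definition Wmat :: "nat \<Rightarrow> nat \<Rightarrow> nat \<Rightarrow> mtuple \<Rightarrow> (nat \<Rightarrow> nat \<Rightarrow> complex) \<Rightarrow> mtuple \<Rightarrow> complex \<Rightarrow> mtuple" where
  "Wmat g n m X1 \<Gamma> X2 t = (\<lambda>i j k. dsum n X1 X2 i j k +
     (if i < g \<and> j < n \<and> n \<le> k \<and> k < n + m then t * Dmat n m X1 \<Gamma> X2 i j (k - n) else 0))"

lemma W_intertwine:
  assumes X1: "X1 \<in> mspace g n" and X2: "X2 \<in> mspace g m"
  shows "intertwines g (n+m) (n+m) (dsum n X1 X2) (Smat n t \<Gamma>) (Wmat g n m X1 \<Gamma> X2 t)"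
  unfolding intertwines_def
proof (intro allI impI)
  fix i a b assume i: "i < g" and a: "a < n + m" and b: "b < n + m"
  have e1: "(\<Sum>c<n. dsum n X1 X2 i a c * \<Gamma> c (b-n)) = (if a < n then (\<Sum>c<n. X1 i a c * \<Gamma> c (b-n)) else 0)"
    by (auto simp: dsum_def intro!: sum.neutral sum.cong)
  have e2: "(\<Sum>c<m. \<Gamma> a c * Wmat g n m X1 \<Gamma> X2 t i (c + n) b) = (if n \<le> b then (\<Sum>c<m. \<Gamma> a c * X2 i c (b-n)) else 0)"
    using X2 by (auto simp: dsum_def Wmat_def mspace_def intro!: sum.neutral sum.cong)
  show "(\<Sum>c<n + m. dsum n X1 X2 i a c * Smat n t \<Gamma> c b) =
        (\<Sum>c<n + m. Smat n t \<Gamma> a c * Wmat g n m X1 \<Gamma> X2 t i c b)"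
    unfolding Smat_right[OF b] Smat_left[OF a] e1 e2
    using i a b by (auto simp: Wmat_def Dmat_def dsum_def algebra_simps)
qed

lemma Smat_cancel:
  assumes "\<And>a. a < n + m \<Longrightarrow> (\<Sum>c<n+m. Smat n t \<Gamma> a c * u c) = (\<Sum>c<n+m. Smat n t \<Gamma> a c * v c)"
    and "a < n + m"
  shows "u a = v a"
proof -
  have hi: "u a = v a" if "n \<le> a" "a < n + m" for a
    using assms(1)[OF that(2)] that unfolding Smat_left[OF that(2)] by simp
  show ?thesis
  proof (cases "n \<le> a")
    case True then show ?thesis using hi assms(2) by blast
  next
    case False
    have "(\<Sum>c<m. \<Gamma> a c * u (c+n)) = (\<Sum>c<m. \<Gamma> a c * v (c+n))"
      using hi by (intro sum.cong) auto
    then show ?thesis using assms(1)[OF assms(2)] False unfolding Smat_left[OF assms(2)] by simp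
  qed
qed

lemma free_dsum:
  assumes fm: "free_map g U V f" and n: "n > 0" and m: "m > 0"
    and X1: "X1 \<in> U n" and X2: "X2 \<in> U m" and P: "dsum n X1 X2 \<in> U (n+m)"
    and Vsub: "\<And>k. k > 0 \<Longrightarrow> V k \<subseteq> mspace g k"
    and Usub: "\<And>k. k > 0 \<Longrightarrow> U k \<subseteq> mspace g k"
  shows "f (n+m) (dsum n X1 X2) = dsum n (f n X1) (f m X2)"
proof -
  define Z where "Z = f (n+m) (dsum n X1 X2)"
  define Y1 where "Y1 = f n X1"
  define Y2 where "Y2 = f m X2"
  have inter: "intertwines g k l (f k A) G (f l B)" if "k>0" "l>0" "A \<in> U k" "B \<in> U l" "intertwines g k l A G B" for k l A B G
    using fm that unfolding free_map_def by blast
  have ZV: "Z \<in> mspace g (n+m)" using fm P Vsub[of "n+m"] n unfolding Z_def free_map_def by auto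
  have Y1V: "Y1 \<in> mspace g n" using fm X1 Vsub[of n] n unfolding Y1_def free_map_def by auto
  have Y2V: "Y2 \<in> mspace g m" using fm X2 Vsub[of m] m unfolding Y2_def free_map_def by auto
  have X1M: "X1 \<in> mspace g n" using X1 Usub n by auto
  have X2M: "X2 \<in> mspace g m" using X2 Usub m by auto
  define i1 where "i1 = (\<lambda>a b::nat. if a = b then 1 else (0::complex))"
  define i2 where "i2 = (\<lambda>a b::nat. if a = b + n then 1 else (0::complex))"
  have s1: "(\<Sum>c<k. h c * i1 c b) = h b" if "b < k" for h k b
    using that sum_delta_r[where h=h and A="{..<k}" and b=b] unfolding i1_def by simp
  have s1': "(\<Sum>c<k. i1 a c * h c) = (if a < k then h a else 0)" for h k a
    using sum_delta_l[where h=h and A="{..<k}" and b=a] unfolding i1_def by simp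
  have s2: "(\<Sum>c<n+m. h c * i2 c b) = h (b+n)" if "b < m" for h b
    using that sum_delta_r[where h=h and A="{..<n+m}" and b="b+n"] unfolding i2_def by simp
  have s2': "(\<Sum>c<m. i2 a c * h c) = (if n \<le> a \<and> a < n + m then h (a-n) else 0)" for h a
  proof -
    have "(\<Sum>c<m. i2 a c * h c) = (\<Sum>c<m. (if a - n = c \<and> n \<le> a then 1 else 0) * h c)"
      unfolding i2_def by (intro sum.cong) auto
    also have "\<dots> = (if n \<le> a then (\<Sum>c<m. (if a - n = c then 1 else 0) * h c) else 0)" by auto
    also have "\<dots> = (if n \<le> a \<and> a < n + m then h (a-n) else 0)"
      using sum_delta_l[where h=h and A="{..<m}" and b="a-n"] by auto
    finally show ?thesis .
  qed
  have t1: "intertwines g (n+m) n (dsum n X1 X2) i1 X1"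
    unfolding intertwines_def using s1 s1' by (auto simp: dsum_def)
  have t2: "intertwines g (n+m) m (dsum n X1 X2) i2 X2"
    unfolding intertwines_def using s2 s2' by (auto simp: dsum_def)
  have u1: "intertwines g (n+m) n Z i1 Y1"
    unfolding Z_def Y1_def using inter[OF _ n P X1 t1] n by simp
  have u2: "intertwines g (n+m) m Z i2 Y2"
    unfolding Z_def Y2_def using inter[OF _ m P X2 t2] n by simp
  have c1: "Z i a b = (if a < n then Y1 i a b else 0)" if "i < g" "a < n+m" "b < n" for i a b
    using u1 that unfolding intertwines_def s1' by (simp add: s1)
  have c2: "Z i a (b+n) = (if n \<le> a then Y2 i (a-n) b else 0)" if "i < g" "a < n+m" "b < m" for i a b
    using u2 that unfolding intertwines_def s2' by (simp add: s2)
  have "Z = dsum n Y1 Y2"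
  proof (intro ext)
    fix i a b
    show "Z i a b = dsum n Y1 Y2 i a b"
    proof (cases "i < g \<and> a < n + m \<and> b < n + m")
      case True
      show ?thesis
      proof (cases "b < n")
        case True then show ?thesis using c1[of i a b] \<open>i < g \<and> a < n + m \<and> b < n + m\<close>
          by (auto simp: dsum_def)
      next
        case False
        then obtain b' where b': "b = b' + n" by (metis add.commute le_Suc_ex not_less)
        then show ?thesis using c2[of i a b'] \<open>i < g \<and> a < n + m \<and> b < n + m\<close> Y1V
          by (auto simp: dsum_def mspace_def)
      qed
    next
      case False
      then show ?thesis using ZV Y1V Y2V by (auto simp: dsum_def mspace_def less_diff_conv2 add.commute)
    qed
  qed
  then show ?thesis unfolding Z_def Y1_def Y2_def .
qed

lemma W_cont: "continuous_on UNIV (Wmat g n m X1 \<Gamma> X2)"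
  unfolding Wmat_def
  apply (intro continuous_on_coordinatewise_then_product)
  subgoal for i j k
    by (cases "i < g \<and> j < n \<and> n \<le> k \<and> k < n + m") (auto intro!: continuous_intros)
  done

lemma W_mspace:
  assumes "X1 \<in> mspace g n" "X2 \<in> mspace g m"
  shows "Wmat g n m X1 \<Gamma> X2 t \<in> mspace g (n+m)"
  using assms by (auto simp: Wmat_def mspace_def dsum_def less_diff_conv2 add.commute)

lemma W_zero: "Wmat g n m X1 \<Gamma> X2 0 = dsum n X1 X2"
  by (rule ext)+ (simp add: Wmat_def)

lemma W_exists:
  assumes op: "openin (top_of_set (mspace g (n+m))) A" and P: "dsum n X1 X2 \<in> A"
    and "X1 \<in> mspace g n" "X2 \<in> mspace g m"
  shows "\<exists>t. t \<noteq> 0 \<and> Wmat g n m X1 \<Gamma> X2 t \<in> A"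
proof -
  obtain T where T: "open T" "A = mspace g (n+m) \<inter> T" using op by (auto simp: openin_open)
  have "open (Wmat g n m X1 \<Gamma> X2 -` T)"
    using W_cont[of g n m X1 \<Gamma> X2] T(1) open_vimage by blast
  moreover have "0 \<in> Wmat g n m X1 \<Gamma> X2 -` T" using P T W_zero by auto
  ultimately obtain e where e: "e > 0" "ball 0 e \<subseteq> Wmat g n m X1 \<Gamma> X2 -` T"
    by (meson open_contains_ball)
  define t where "t = complex_of_real (e/2)"
  have "t \<noteq> 0" "t \<in> ball 0 e" using e by (auto simp: t_def)
  then show ?thesis using e T W_mspace[OF assms(3,4)] by blast
qed

lemma inv_intertwine:
  assumes U: "nc_domain g U" and V: "nc_domain g V" and fm: "free_map g U V f"
    and bij: "\<forall>n>0. bij_betw (f n) (U n) (V n)"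
    and n: "n > 0" and m: "m > 0" and Y1: "Y1 \<in> V n" and Y2: "Y2 \<in> V m"
    and it: "intertwines g n m Y1 \<Gamma> Y2"
  shows "intertwines g n m (inv_into (U n) (f n) Y1) \<Gamma> (inv_into (U m) (f m) Y2)"
proof -
  define N where "N = n + m"
  have N: "N > 0" using n unfolding N_def by simp
  have Uc: "nc_set g U" and Vc: "nc_set g V" and Uop': "\<forall>k>0. openin (top_of_set (mspace g k)) (U k) \<and> connected (U k)"
    using U V unfolding nc_domain_def by auto
  have Usub: "\<And>k. k > 0 \<Longrightarrow> U k \<subseteq> mspace g k" using conjunct1[OF Uc[unfolded nc_set_def]] by blast
  have Vsub: "\<And>k. k > 0 \<Longrightarrow> V k \<subseteq> mspace g k" using conjunct1[OF Vc[unfolded nc_set_def]] by blast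
  have Ods: "\<And>k l A B. k > 0 \<Longrightarrow> l > 0 \<Longrightarrow> A \<in> U k \<Longrightarrow> B \<in> U l \<Longrightarrow> dsum k A B \<in> U (k + l)"
    using conjunct2[OF conjunct2[OF Uc[unfolded nc_set_def]]] by blast
  have Uop: "openin (top_of_set (mspace g N)) (U N)" using Uop' N by blast
  have fV: "\<And>k A. k > 0 \<Longrightarrow> A \<in> U k \<Longrightarrow> f k A \<in> V k" using conjunct1[OF fm[unfolded free_map_def]] by blast
  have inter: "intertwines g k l (f k A) G (f l B)" if "k>0" "l>0" "A \<in> U k" "B \<in> U l" "intertwines g k l A G B" for k l A B G
    using conjunct2[OF fm[unfolded free_map_def]] that by blast
  define X1 where "X1 = inv_into (U n) (f n) Y1"
  define X2 where "X2 = inv_into (U m) (f m) Y2"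
  have bn: "bij_betw (f n) (U n) (V n)" and bm: "bij_betw (f m) (U m) (V m)" and bN: "bij_betw (f N) (U N) (V N)"
    using bij n m N by auto
  have X1U: "X1 \<in> U n" unfolding X1_def using bn Y1 by (metis bij_betw_def inv_into_into)
  have X2U: "X2 \<in> U m" unfolding X2_def using bm Y2 by (metis bij_betw_def inv_into_into)
  have fX1: "f n X1 = Y1" unfolding X1_def using bn Y1 by (metis bij_betw_def f_inv_into_f)
  have fX2: "f m X2 = Y2" unfolding X2_def using bm Y2 by (metis bij_betw_def f_inv_into_f)
  have X1M: "X1 \<in> mspace g n" using X1U Usub n by auto
  have X2M: "X2 \<in> mspace g m" using X2U Usub m by auto
  have Y1M: "Y1 \<in> mspace g n" using Y1 Vsub n by auto
  have Y2M: "Y2 \<in> mspace g m" using Y2 Vsub m by auto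
  have PU: "dsum n X1 X2 \<in> U N" unfolding N_def using Ods[OF n m X1U X2U] .
  obtain t where t: "t \<noteq> 0" and WU: "Wmat g n m X1 \<Gamma> X2 t \<in> U N"
    using W_exists[OF Uop[unfolded N_def] PU[unfolded N_def] X1M X2M] unfolding N_def by blast
  define W where "W = Wmat g n m X1 \<Gamma> X2 t"
  define Q where "Q = dsum n Y1 Y2"
  have fP: "f N (dsum n X1 X2) = Q"
    unfolding N_def Q_def using free_dsum[OF fm n m X1U X2U PU[unfolded N_def] Vsub Usub] fX1 fX2 by simp
  have QM: "Q \<in> mspace g N" using fP fV[OF N PU] Vsub[OF N] by auto
  have fWM: "f N W \<in> mspace g N" using fV[OF N WU[folded W_def]] Vsub[OF N] by auto
  have i1: "intertwines g N N Q (Smat n t \<Gamma>) (f N W)"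
    using inter[OF N N PU WU[folded W_def]] W_intertwine[OF X1M X2M, of t \<Gamma>] fP
    unfolding W_def N_def by simp
  have D0: "Dmat n m Y1 \<Gamma> Y2 i a b = 0" if "i < g" "a < n" "b < m" for i a b
    using it that unfolding intertwines_def Dmat_def by simp
  have WQ: "Wmat g n m Y1 \<Gamma> Y2 t = Q"
    unfolding Q_def Wmat_def by (intro ext) (auto simp: D0)
  have i2: "intertwines g N N Q (Smat n t \<Gamma>) Q"
    using W_intertwine[OF Y1M Y2M, of t \<Gamma>] WQ unfolding Q_def N_def by simp
  have "f N W = Q"
  proof (intro ext)
    fix i a b
    show "f N W i a b = Q i a b"
    proof (cases "i < g \<and> a < N \<and> b < N")
      case True
      show ?thesis
        apply (rule Smat_cancel[where n=n and m=m and t=t and \<Gamma>=\<Gamma> and u="\<lambda>c. f N W i c b" and v="\<lambda>c. Q i c b"])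
        using i1 i2 True unfolding intertwines_def N_def by auto
    next
      case False then show ?thesis using QM fWM by (auto simp: mspace_def)
    qed
  qed
  then have "f N W = f N (dsum n X1 X2)" using fP by simp
  then have WP: "W = dsum n X1 X2"
    using bN WU[folded W_def] PU unfolding bij_betw_def inj_on_def by blast
  have "Dmat n m X1 \<Gamma> X2 i a b = 0" if "i < g" "a < n" "b < m" for i a b
  proof -
    have "W i a (b + n) = dsum n X1 X2 i a (b+n)" using WP by simp
    then have "t * Dmat n m X1 \<Gamma> X2 i a b = 0" using that unfolding W_def Wmat_def by simp
    then show ?thesis using t by simp
  qed
  then show ?thesis unfolding X1_def[symmetric] X2_def[symmetric] intertwines_def Dmat_def by simp
qed



lemma proj_cont: "continuous_on S (\<lambda>Y::mtuple. Y a b c)"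
proof -
  have 1: "continuous_on S (\<lambda>Y::mtuple. Y a)"
    using continuous_on_product_then_coordinatewise[OF continuous_on_id[of S]] by simp
  have 2: "continuous_on S (\<lambda>Y::mtuple. Y a b)"
    using continuous_on_product_then_coordinatewise[OF 1, of b] by simp
  show ?thesis
    using continuous_on_product_then_coordinatewise[OF 2, of c] by simp
qed

lemma proj_tendsto: "((\<lambda>Y::mtuple. Y a b c) \<longlongrightarrow> X a b c) (at X within S)"
proof -
  have "((\<lambda>Y::mtuple. Y a b c) \<longlongrightarrow> X a b c) (at X within UNIV)"
    using proj_cont[of UNIV a b c] unfolding continuous_on_def by auto
  then show ?thesis by (rule tendsto_within_subset) auto
qed

lemma coord_le:
  assumes "i < g" "j < n" "k < n"
  shows "cmod (Z i j k) \<le> mnorm g n Z"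
proof -
  have "(cmod (Z i j k))\<^sup>2 \<le> (\<Sum>k'<n. (cmod (Z i j k'))\<^sup>2)"
    using assms by (intro member_le_sum) auto
  also have "\<dots> \<le> (\<Sum>j'<n. \<Sum>k'<n. (cmod (Z i j' k'))\<^sup>2)"
    using assms by (intro member_le_sum[where f="\<lambda>j'. \<Sum>k'<n. (cmod (Z i j' k'))\<^sup>2"]) (auto intro!: sum_nonneg)
  also have "\<dots> \<le> (\<Sum>i'<g. \<Sum>j'<n. \<Sum>k'<n. (cmod (Z i' j' k'))\<^sup>2)"
    using assms by (intro member_le_sum[where f="\<lambda>i'. \<Sum>j'<n. \<Sum>k'<n. (cmod (Z i' j' k'))\<^sup>2"]) (auto intro!: sum_nonneg)
  finally have "sqrt ((cmod (Z i j k))\<^sup>2) \<le> mnorm g n Z"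
    unfolding mnorm_def by (rule real_sqrt_le_mono)
  then show ?thesis by simp
qed

lemma mnorm_pos:
  assumes "X \<in> mspace g n" "Y \<in> mspace g n" "Y \<noteq> X"
  shows "mnorm g n (mdiff Y X) > 0"
proof -
  obtain i j k where d: "Y i j k \<noteq> X i j k" using assms(3) by blast
  have b0: "i < g \<and> j < n \<and> k < n"
  proof (rule ccontr)
    assume nb: "\<not> (i < g \<and> j < n \<and> k < n)"
    have "Y i j k = 0" using assms(2) nb unfolding mspace_def by simp
    moreover have "X i j k = 0" using assms(1) nb unfolding mspace_def by simp
    ultimately show False using d by simp
  qed
  then have b: "i < g" "j < n" "k < n" by auto
  have "0 < cmod (mdiff Y X i j k)" using d by (simp add: mdiff_def)
  also have "\<dots> \<le> mnorm g n (mdiff Y X)" using coord_le[OF b] .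
  finally show ?thesis .
qed

definition restr :: "(nat \<times> nat \<times> nat) set \<Rightarrow> mtuple \<Rightarrow> mtuple" where
  "restr A Z = (\<lambda>a b c. if (a,b,c) \<in> A then Z a b c else 0)"

definition Eb :: "nat \<times> nat \<times> nat \<Rightarrow> mtuple" where
  "Eb p = (\<lambda>a b c. if (a,b,c) = p then 1 else 0)"

definition cz :: "mtuple \<Rightarrow> nat \<times> nat \<times> nat \<Rightarrow> complex" where
  "cz Z p = Z (fst p) (fst (snd p)) (snd (snd p))"

lemma Llin_gen:
  assumes "mclinear g n L" "X \<in> mspace g n" "Y \<in> mspace g n"
  shows "L (\<lambda>i j k. a * X i j k + Y i j k) = (\<lambda>i j k. a * L X i j k + L Y i j k)"
  using conjunct2[OF assms(1)[unfolded mclinear_def], rule_format, OF assms(2,3)] .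

lemma lin_restr:
  assumes L: "mclinear g n L" and Z: "Z \<in> mspace g n"
    and A: "finite A" "A \<subseteq> {..<g} \<times> {..<n} \<times> {..<n}"
  shows "L (restr A Z) = (\<lambda>i j k. \<Sum>p\<in>A. cz Z p * L (Eb p) i j k)"
  using A
proof (induction A rule: finite_induct)
  case empty
  have z: "(\<lambda>_ _ _. 0::complex) \<in> mspace g n" by (simp add: mspace_def)
  have "L (\<lambda>i j k. (-1) * 0 + 0) = (\<lambda>i j k. (-1) * L (\<lambda>_ _ _. 0) i j k + L (\<lambda>_ _ _. 0) i j k)"
    by (rule Llin_gen[OF L z z])
  then have "L (\<lambda>_ _ _. 0) = (\<lambda>_ _ _. 0)" by simp
  moreover have "restr {} Z = (\<lambda>_ _ _. 0)" by (simp add: restr_def)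
  ultimately show ?case by simp
next
  case (insert p A)
  have Ep: "Eb p \<in> mspace g n" using insert.prems by (auto simp: Eb_def mspace_def)
  have RA: "restr A Z \<in> mspace g n" using Z by (auto simp: restr_def mspace_def)
  have eq: "restr (insert p A) Z = (\<lambda>i j k. cz Z p * Eb p i j k + restr A Z i j k)"
    using insert.hyps by (intro ext) (auto simp: restr_def Eb_def cz_def)
  have "L (restr (insert p A) Z) = (\<lambda>i j k. cz Z p * L (Eb p) i j k + L (restr A Z) i j k)"
    unfolding eq by (rule Llin_gen[OF L Ep RA])
  then show ?case using insert by (simp add: sum.insert)
qed

lemma lin_formula:
  assumes L: "mclinear g n L" and Z: "Z \<in> mspace g n"
  shows "L Z i j k = (\<Sum>p\<in>{..<g} \<times> {..<n} \<times> {..<n}. cz Z p * L (Eb p) i j k)"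
proof -
  have "restr ({..<g} \<times> {..<n} \<times> {..<n}) Z = Z"
    using Z by (intro ext) (auto simp: restr_def mspace_def)
  then show ?thesis using lin_restr[OF L Z, of "{..<g} \<times> {..<n} \<times> {..<n}"] by simp
qed

lemma ev_within: "(\<And>Y. Y \<in> S \<Longrightarrow> Y \<noteq> X \<Longrightarrow> P Y) \<Longrightarrow> eventually P (at X within S)"
  unfolding eventually_at_filter by (intro always_eventually) auto

lemma holo_coord_cont:
  assumes S: "S \<subseteq> mspace g n" and H: "mholo_on g n F S"
  shows "continuous_on S (\<lambda>Y. F Y i j k)"
proof (cases "i < g \<and> j < n \<and> k < n")
  case False
  have FM: "\<And>X. X \<in> S \<Longrightarrow> F X \<in> mspace g n" using H unfolding mholo_on_def by blast
  show ?thesis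
  proof (rule continuous_on_eq[OF continuous_on_const[of S "0::complex"]])
    fix Y assume "Y \<in> S"
    then show "0 = F Y i j k" using FM[of Y] False unfolding mspace_def by simp
  qed
next
  case True
  then have ijk: "i < g" "j < n" "k < n" by auto
  show ?thesis unfolding continuous_on_def
  proof
    fix X assume XS: "X \<in> S"
    obtain L where L: "mclinear g n L" and lim:
      "((\<lambda>Y. mnorm g n (mdiff (mdiff (F Y) (F X)) (L (mdiff Y X))) / mnorm g n (mdiff Y X)) \<longlongrightarrow> 0) (at X within S)"
      using H XS unfolding mholo_on_def by blast
    define A where "A Y = mdiff (mdiff (F Y) (F X)) (L (mdiff Y X))" for Y
    define r where "r Y = mnorm g n (A Y) / mnorm g n (mdiff Y X)" for Y
    have XM: "X \<in> mspace g n" using XS S by auto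
    have "((\<lambda>Y. mnorm g n (mdiff Y X)) \<longlongrightarrow> mnorm g n (mdiff X X)) (at X within S)"
      unfolding mnorm_def mdiff_def by (intro tendsto_intros proj_tendsto)
    then have nd: "((\<lambda>Y. mnorm g n (mdiff Y X)) \<longlongrightarrow> 0) (at X within S)"
      by (simp add: mnorm_def mdiff_def)
    have r0: "(r \<longlongrightarrow> 0) (at X within S)" using lim unfolding r_def A_def .
    have "((\<lambda>Y. r Y * mnorm g n (mdiff Y X)) \<longlongrightarrow> 0 * 0) (at X within S)"
      by (intro tendsto_mult r0 nd)
    then have g0: "((\<lambda>Y. r Y * mnorm g n (mdiff Y X)) \<longlongrightarrow> 0) (at X within S)" by simp
    have "eventually (\<lambda>Y. norm (A Y i j k) \<le> r Y * mnorm g n (mdiff Y X)) (at X within S)"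
    proof (rule ev_within)
      fix Y assume YS: "Y \<in> S" and YX: "Y \<noteq> X"
      have pos: "mnorm g n (mdiff Y X) > 0" using mnorm_pos[OF XM _ YX] YS S by auto
      have "norm (A Y i j k) \<le> mnorm g n (A Y)" using coord_le[OF ijk] by simp
      also have "\<dots> = r Y * mnorm g n (mdiff Y X)" unfolding r_def using pos by simp
      finally show "norm (A Y i j k) \<le> r Y * mnorm g n (mdiff Y X)" .
    qed
    then have a0: "((\<lambda>Y. A Y i j k) \<longlongrightarrow> 0) (at X within S)"
      using g0 by (rule Lim_null_comparison)
    define B where "B = {..<g} \<times> {..<n} \<times> {..<n}"
    have "((\<lambda>Y. \<Sum>p\<in>B. cz (mdiff Y X) p * L (Eb p) i j k) \<longlongrightarrow> (\<Sum>p\<in>B. cz (mdiff X X) p * L (Eb p) i j k)) (at X within S)"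
      unfolding cz_def mdiff_def by (intro tendsto_intros proj_tendsto)
    then have "((\<lambda>Y. \<Sum>p\<in>B. cz (mdiff Y X) p * L (Eb p) i j k) \<longlongrightarrow> 0) (at X within S)"
      by (simp add: cz_def mdiff_def)
    moreover have "eventually (\<lambda>Y. (\<Sum>p\<in>B. cz (mdiff Y X) p * L (Eb p) i j k) = L (mdiff Y X) i j k) (at X within S)"
    proof (rule ev_within)
      fix Y assume YS: "Y \<in> S"
      then have "mdiff Y X \<in> mspace g n" using XM S by (auto simp: mspace_def mdiff_def)
      then show "(\<Sum>p\<in>B. cz (mdiff Y X) p * L (Eb p) i j k) = L (mdiff Y X) i j k"
        unfolding B_def using lin_formula[OF L] by simp
    qed
    ultimately have l0: "((\<lambda>Y. L (mdiff Y X) i j k) \<longlongrightarrow> 0) (at X within S)"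
      by (rule Lim_transform_eventually)
    have "((\<lambda>Y. F X i j k + A Y i j k + L (mdiff Y X) i j k) \<longlongrightarrow> F X i j k + 0 + 0) (at X within S)"
      by (intro tendsto_add tendsto_const a0 l0)
    moreover have "\<And>Y. F X i j k + A Y i j k + L (mdiff Y X) i j k = F Y i j k"
      unfolding A_def mdiff_def by simp
    ultimately show "((\<lambda>Y. F Y i j k) \<longlongrightarrow> F X i j k) (at X within S)" by simp
  qed
qed

lemma holo_cont:
  assumes S: "S \<subseteq> mspace g n" and H: "mholo_on g n F S"
  shows "continuous_on S F"
  apply (rule continuous_on_coordinatewise_then_product)
  apply (rule continuous_on_coordinatewise_then_product)
  apply (rule continuous_on_coordinatewise_then_product)
  apply (rule holo_coord_cont[OF S H])
  done


theorem corollary3p2: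
  fixes g :: nat and U V :: "nat \<Rightarrow> mtuple set" and f :: "nat \<Rightarrow> mtuple \<Rightarrow> mtuple"
  assumes "nc_domain g U" and "nc_domain g V"
    and "free_map g U V f"
    and "\<forall>n>0. bianalytic_on g n (U n) (V n) (f n)"
  shows "proper_analytic_free_map g U V f \<and>
         proper_analytic_free_map g V U (\<lambda>n. inv_into (U n) (f n))"
proof -
  have Uc: "nc_set g U" and Vc: "nc_set g V" using assms(1,2) unfolding nc_domain_def by auto
  have Usub: "\<And>k. k > 0 \<Longrightarrow> U k \<subseteq> mspace g k" using conjunct1[OF Uc[unfolded nc_set_def]] by blast
  have Vsub: "\<And>k. k > 0 \<Longrightarrow> V k \<subseteq> mspace g k" using conjunct1[OF Vc[unfolded nc_set_def]] by blast
  have bij: "\<And>n. n > 0 \<Longrightarrow> bij_betw (f n) (U n) (V n)"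
    and hf: "\<And>n. n > 0 \<Longrightarrow> mholo_on g n (f n) (U n)"
    and hi: "\<And>n. n > 0 \<Longrightarrow> mholo_on g n (inv_into (U n) (f n)) (V n)"
    using assms(4) unfolding bianalytic_on_def by auto
  have cf: "\<And>n. n > 0 \<Longrightarrow> continuous_on (U n) (f n)" using holo_cont[OF Usub hf] by blast
  have ci: "\<And>n. n > 0 \<Longrightarrow> continuous_on (V n) (inv_into (U n) (f n))" using holo_cont[OF Vsub hi] by blast
  have P1: "proper_on (U n) (V n) (f n)" if n: "n > 0" for n
    unfolding proper_on_def
  proof (intro allI impI)
    fix K assume KV: "K \<subseteq> V n" and K: "compact K"
    have b: "bij_betw (f n) (U n) (V n)" using bij n .
    have "{X \<in> U n. f n X \<in> K} = inv_into (U n) (f n) ` K"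
    proof
      show "{X \<in> U n. f n X \<in> K} \<subseteq> inv_into (U n) (f n) ` K"
      proof
        fix X assume "X \<in> {X \<in> U n. f n X \<in> K}"
        then have "X \<in> U n" "f n X \<in> K" by auto
        then show "X \<in> inv_into (U n) (f n) ` K"
          using b by (metis bij_betw_def image_eqI inv_into_f_f)
      qed
      show "inv_into (U n) (f n) ` K \<subseteq> {X \<in> U n. f n X \<in> K}"
      proof
        fix X assume "X \<in> inv_into (U n) (f n) ` K"
        then obtain Y where Y: "Y \<in> K" "X = inv_into (U n) (f n) Y" by auto
        then have "Y \<in> f n ` U n" using KV b by (auto simp: bij_betw_def)
        then show "X \<in> {X \<in> U n. f n X \<in> K}" using Y by (auto intro: inv_into_into simp: f_inv_into_f)
      qed
    qed
    moreover have "compact (inv_into (U n) (f n) ` K)"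
      using compact_continuous_image[OF continuous_on_subset[OF ci[OF n] KV] K] .
    ultimately show "compact {X \<in> U n. f n X \<in> K}" by simp
  qed
  have P2: "proper_on (V n) (U n) (inv_into (U n) (f n))" if n: "n > 0" for n
    unfolding proper_on_def
  proof (intro allI impI)
    fix K assume KU: "K \<subseteq> U n" and K: "compact K"
    have b: "bij_betw (f n) (U n) (V n)" using bij n .
    have "{Y \<in> V n. inv_into (U n) (f n) Y \<in> K} = f n ` K"
    proof
      show "{Y \<in> V n. inv_into (U n) (f n) Y \<in> K} \<subseteq> f n ` K"
      proof
        fix Y assume "Y \<in> {Y \<in> V n. inv_into (U n) (f n) Y \<in> K}"
        then have "Y \<in> V n" "inv_into (U n) (f n) Y \<in> K" by auto
        moreover have "Y \<in> f n ` U n" using \<open>Y \<in> V n\<close> b by (simp add: bij_betw_def)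
        ultimately have "f n (inv_into (U n) (f n) Y) = Y" "inv_into (U n) (f n) Y \<in> K"
          by (auto simp: f_inv_into_f)
        then show "Y \<in> f n ` K" by (metis image_eqI)
      qed
      show "f n ` K \<subseteq> {Y \<in> V n. inv_into (U n) (f n) Y \<in> K}"
      proof
        fix Y assume "Y \<in> f n ` K"
        then obtain X where X: "X \<in> K" "Y = f n X" by auto
        then have "X \<in> U n" using KU by auto
        then show "Y \<in> {Y \<in> V n. inv_into (U n) (f n) Y \<in> K}"
          using X b by (auto simp: bij_betw_def inv_into_f_f)
      qed
    qed
    moreover have "compact (f n ` K)"
      using compact_continuous_image[OF continuous_on_subset[OF cf[OF n] KU] K] .
    ultimately show "compact {Y \<in> V n. inv_into (U n) (f n) Y \<in> K}" by simp
  qed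
  have F2: "free_map g V U (\<lambda>n. inv_into (U n) (f n))"
    unfolding free_map_def
  proof (intro conjI allI impI ballI)
    fix n Y assume n: "n > 0" and Y: "Y \<in> V n"
    then show "inv_into (U n) (f n) Y \<in> U n"
      using bij[OF n] by (metis bij_betw_def inv_into_into)
  next
    fix n m X Y \<Gamma> assume "n > 0" "m > 0" "X \<in> V n" "Y \<in> V m" "intertwines g n m X \<Gamma> Y"
    then show "intertwines g n m (inv_into (U n) (f n) X) \<Gamma> (inv_into (U m) (f m) Y)"
      using inv_intertwine[OF assms(1,2,3)] bij by blast
  qed
  show ?thesis
    unfolding proper_analytic_free_map_def analytic_free_map_def
    using assms(3) F2 hf hi P1 P2 by blast
qed

end
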